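(* In the reachability strategy-improvement algorithm described in the context, for all $i\ge0$ the player-1 selector $\gamma_i$ obtained at iteration $i$ is proper.
   Context: Concurrent game structure $G=(S,M,\Gamma_1,\Gamma_2,\delta)$: finite states, finite moves, nonempty move sets $\Gamma_i(s)$, $\delta(s,a_1,a_2)\in\mathrm{Distr}(S)$ (simultaneous independent moves). Selectors assign to each state a distribution on available moves; $\overline{\xi}$ is the memoryless strategy playing $\xi$ forever; $\Pr_s^{\pi_1,\pi_2}$ is the induced measure on plays; $\mathrm{Reach}(X)$: plays visiting $X$. $\mathrm{val}_1^{\pi_1}(\mathrm{Reach}(T))(s)=\inf_{\pi_2}\Pr_s^{\pi_1,\pi_2}(\mathrm{Reach}(T))$, $\mathrm{val}_1(\mathrm{Reach}(T))=\sup_{\pi_1}\mathrm{val}_1^{\pi_1}(\mathrm{Reach}(T))$. For a valuation $v:S\to[0,1]$: $\mathrm{Pre}_{\xi_1,\xi_2}(v)(s)=\sum_{a,b}\sum_tv(t)\delta(s,a,b)(t)\xi_1(s)(a)\xi_2(s)(b)$, $\mathrm{Pre}_{1:\xi_1}(v)(s)=\inf_{\xi_2}\mathrm{Pre}_{\xi_1,\xi_2}(v)(s)$, $\mathrm{Pre}_1(v)(s)=\sup_{\xi_1}\mathrm{Pre}_{1:\xi_1}(v)(s)$. Fix $T\subseteq S$, $W_2=\{s:\mathrm{val}_1(\mathrm{Reach}(T))(s)=0\}$; all states of $T\cup W_2$ are absorbing. A player-1 strategy is proper if, against every player-2 strategy, from every $s\in S\setminus(T\cup W_2)$, $T\cup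 W_2$ is reached with probability 1; a selector $\xi$ is proper if $\overline{\xi}$ is. The algorithm: $\gamma_0$ is the uniform selector on $\Gamma_1(s)$, $v_i=\mathrm{val}_1^{\overline{\gamma}_i}(\mathrm{Reach}(T))$. At iteration $i$: $I=\{s\in S\setminus(T\cup W_2):\mathrm{Pre}_1(v_i)(s)>v_i(s)\}$; $\xi_1$ is a selector with $\mathrm{Pre}_{1:\xi_1}(v_i)(s)=\mathrm{Pre}_1(v_i)(s)$ for $s\in I$; $\gamma_{i+1}(s)=\gamma_i(s)$ for $s\notin I$ and $\gamma_{i+1}(s)=\xi_1(s)$ for $s\in I$; stop when $I=\emptyset$. *)

theory Defs
  imports "HOL-Probability.Probability"
begin

text \<open>Concurrent game structure with finite state type 's and finite move type 'm:
  G1, G2 :: 's => 'm set (available moves), delta :: 's => 'm => 'm => 's pmf.\<close>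

definition selector :: "('s \<Rightarrow> 'm set) \<Rightarrow> ('s \<Rightarrow> 'm pmf) \<Rightarrow> bool" where
  "selector G \<xi> \<longleftrightarrow> (\<forall>s. set_pmf (\<xi> s) \<subseteq> G s)"

definition strategy :: "('s \<Rightarrow> 'm set) \<Rightarrow> ('s list \<Rightarrow> 'm pmf) \<Rightarrow> bool" where
  "strategy G \<pi> \<longleftrightarrow> (\<forall>h. h \<noteq> [] \<longrightarrow> set_pmf (\<pi> h) \<subseteq> G (last h))"

definition memoryless :: "('s \<Rightarrow> 'm pmf) \<Rightarrow> 's list \<Rightarrow> 'm pmf" where
  "memoryless \<xi> = (\<lambda>h. \<xi> (last h))"

fun reach_within :: "('s::finite \<Rightarrow> 'm::finite \<Rightarrow> 'm \<Rightarrow> 's pmf) \<Rightarrow> ('s list \<Rightarrow> 'm pmf)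
    \<Rightarrow> ('s list \<Rightarrow> 'm pmf) \<Rightarrow> 's set \<Rightarrow> nat \<Rightarrow> 's list \<Rightarrow> real" where
  "reach_within \<delta> \<pi>1 \<pi>2 X 0 h = (if last h \<in> X then 1 else 0)"
| "reach_within \<delta> \<pi>1 \<pi>2 X (Suc n) h =
     (if last h \<in> X then 1 else
      (\<Sum>a\<in>UNIV. \<Sum>b\<in>UNIV. \<Sum>t\<in>UNIV.
         pmf (\<pi>1 h) a * pmf (\<pi>2 h) b * pmf (\<delta> (last h) a b) t * reach_within \<delta> \<pi>1 \<pi>2 X n (h @ [t])))"

text \<open>Pr_s^{pi1,pi2}(Reach X): by continuity of measure, the limit (supremum) of the
  probabilities of visiting X within n steps.\<close>
definition reach_prob :: "('s::finite \<Rightarrow> 'm::finite \<Rightarrow> 'm \<Rightarrow> 's pmf) \<Rightarrow> ('s list \<Rightarrow> 'm pmf)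
    \<Rightarrow> ('s list \<Rightarrow> 'm pmf) \<Rightarrow> 's set \<Rightarrow> 's \<Rightarrow> real" where
  "reach_prob \<delta> \<pi>1 \<pi>2 X s = (SUP n. reach_within \<delta> \<pi>1 \<pi>2 X n [s])"

definition val1_strat :: "('s::finite \<Rightarrow> 'm::finite set) \<Rightarrow> ('s \<Rightarrow> 'm \<Rightarrow> 'm \<Rightarrow> 's pmf)
    \<Rightarrow> ('s list \<Rightarrow> 'm pmf) \<Rightarrow> 's set \<Rightarrow> 's \<Rightarrow> real" where
  "val1_strat G2 \<delta> \<pi>1 X s = (INF \<pi>2 \<in> {\<pi>. strategy G2 \<pi>}. reach_prob \<delta> \<pi>1 \<pi>2 X s)"

definition val1 :: "('s::finite \<Rightarrow> 'm::finite set) \<Rightarrow> ('s \<Rightarrow> 'm set) \<Rightarrow> ('s \<Rightarrow> 'm \<Rightarrow> 'm \<Rightarrow> 's pmf)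
    \<Rightarrow> 's set \<Rightarrow> 's \<Rightarrow> real" where
  "val1 G1 G2 \<delta> X s = (SUP \<pi>1 \<in> {\<pi>. strategy G1 \<pi>}. val1_strat G2 \<delta> \<pi>1 X s)"

definition W2 :: "('s::finite \<Rightarrow> 'm::finite set) \<Rightarrow> ('s \<Rightarrow> 'm set) \<Rightarrow> ('s \<Rightarrow> 'm \<Rightarrow> 'm \<Rightarrow> 's pmf)
    \<Rightarrow> 's set \<Rightarrow> 's set" where
  "W2 G1 G2 \<delta> T = {s. val1 G1 G2 \<delta> T s = 0}"

definition proper :: "('s::finite \<Rightarrow> 'm::finite set) \<Rightarrow> ('s \<Rightarrow> 'm set) \<Rightarrow> ('s \<Rightarrow> 'm \<Rightarrow> 'm \<Rightarrow> 's pmf)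
    \<Rightarrow> 's set \<Rightarrow> ('s list \<Rightarrow> 'm pmf) \<Rightarrow> bool" where
  "proper G1 G2 \<delta> T \<pi>1 \<longleftrightarrow>
     (\<forall>\<pi>2. strategy G2 \<pi>2 \<longrightarrow>
        (\<forall>s. s \<notin> T \<union> W2 G1 G2 \<delta> T \<longrightarrow> reach_prob \<delta> \<pi>1 \<pi>2 (T \<union> W2 G1 G2 \<delta> T) s = 1))"

definition proper_selector :: "('s::finite \<Rightarrow> 'm::finite set) \<Rightarrow> ('s \<Rightarrow> 'm set)
    \<Rightarrow> ('s \<Rightarrow> 'm \<Rightarrow> 'm \<Rightarrow> 's pmf) \<Rightarrow> 's set \<Rightarrow> ('s \<Rightarrow> 'm pmf) \<Rightarrow> bool" where
  "proper_selector G1 G2 \<delta> T \<xi> \<longleftrightarrow> proper G1 G2 \<delta> T (memoryless \<xi>)"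

definition PreAB :: "('s::finite \<Rightarrow> 'm::finite \<Rightarrow> 'm \<Rightarrow> 's pmf) \<Rightarrow> ('s \<Rightarrow> 'm pmf) \<Rightarrow> ('s \<Rightarrow> 'm pmf)
    \<Rightarrow> ('s \<Rightarrow> real) \<Rightarrow> 's \<Rightarrow> real" where
  "PreAB \<delta> \<xi>1 \<xi>2 v s =
     (\<Sum>a\<in>UNIV. \<Sum>b\<in>UNIV. \<Sum>t\<in>UNIV. v t * pmf (\<delta> s a b) t * pmf (\<xi>1 s) a * pmf (\<xi>2 s) b)"

definition Pre1_sel :: "('s::finite \<Rightarrow> 'm::finite set) \<Rightarrow> ('s \<Rightarrow> 'm \<Rightarrow> 'm \<Rightarrow> 's pmf)
    \<Rightarrow> ('s \<Rightarrow> 'm pmf) \<Rightarrow> ('s \<Rightarrow> real) \<Rightarrow> 's \<Rightarrow> real" where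
  "Pre1_sel G2 \<delta> \<xi>1 v s = (INF \<xi>2 \<in> {\<xi>. selector G2 \<xi>}. PreAB \<delta> \<xi>1 \<xi>2 v s)"

definition Pre1 :: "('s::finite \<Rightarrow> 'm::finite set) \<Rightarrow> ('s \<Rightarrow> 'm set) \<Rightarrow> ('s \<Rightarrow> 'm \<Rightarrow> 'm \<Rightarrow> 's pmf)
    \<Rightarrow> ('s \<Rightarrow> real) \<Rightarrow> 's \<Rightarrow> real" where
  "Pre1 G1 G2 \<delta> v s = (SUP \<xi>1 \<in> {\<xi>. selector G1 \<xi>}. Pre1_sel G2 \<delta> \<xi>1 v s)"

definition sel_val :: "('s::finite \<Rightarrow> 'm::finite set) \<Rightarrow> ('s \<Rightarrow> 'm \<Rightarrow> 'm \<Rightarrow> 's pmf)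
    \<Rightarrow> 's set \<Rightarrow> ('s \<Rightarrow> 'm pmf) \<Rightarrow> 's \<Rightarrow> real" where
  "sel_val G2 \<delta> T \<gamma> = val1_strat G2 \<delta> (memoryless \<gamma>) T"

definition improve_set :: "('s::finite \<Rightarrow> 'm::finite set) \<Rightarrow> ('s \<Rightarrow> 'm set) \<Rightarrow> ('s \<Rightarrow> 'm \<Rightarrow> 'm \<Rightarrow> 's pmf)
    \<Rightarrow> 's set \<Rightarrow> ('s \<Rightarrow> 'm pmf) \<Rightarrow> 's set" where
  "improve_set G1 G2 \<delta> T \<gamma> =
     {s. s \<notin> T \<union> W2 G1 G2 \<delta> T \<and> Pre1 G1 G2 \<delta> (sel_val G2 \<delta> T \<gamma>) s > sel_val G2 \<delta> T \<gamma> s}"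

end

theory Submission
  imports Defs
begin


lemma w_sum:
  fixes p q :: "'m::finite pmf" and r :: "'m \<Rightarrow> 'm \<Rightarrow> 's::finite pmf"
  shows "(\<Sum>a\<in>UNIV. \<Sum>b\<in>UNIV. \<Sum>t\<in>UNIV. pmf p a * pmf q b * pmf (r a b) t) = 1"
proof -
  have "(\<Sum>t\<in>UNIV. pmf p a * pmf q b * pmf (r a b) t) = pmf p a * pmf q b" for a b
    by (simp add: sum_distrib_left[symmetric] sum_pmf_eq_1)
  moreover have "(\<Sum>b\<in>UNIV. pmf p a * pmf q b) = pmf p a" for a
    by (simp add: sum_distrib_left[symmetric] sum_pmf_eq_1)
  ultimately show ?thesis by (simp add: sum_pmf_eq_1)
qed

lemma rw_nonneg: "0 \<le> reach_within \<delta> \<pi>1 \<pi>2 X n h"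
  by (induction n arbitrary: h) (auto intro!: sum_nonneg)

lemma rw_le1: "reach_within \<delta> \<pi>1 \<pi>2 X n h \<le> 1"
proof (induction n arbitrary: h)
  case 0 then show ?case by simp
next
  case (Suc n)
  have "(\<Sum>a\<in>UNIV. \<Sum>b\<in>UNIV. \<Sum>t\<in>UNIV.
         pmf (\<pi>1 h) a * pmf (\<pi>2 h) b * pmf (\<delta> (last h) a b) t * reach_within \<delta> \<pi>1 \<pi>2 X n (h @ [t]))
     \<le> (\<Sum>a\<in>UNIV. \<Sum>b\<in>UNIV. \<Sum>t\<in>UNIV. pmf (\<pi>1 h) a * pmf (\<pi>2 h) b * pmf (\<delta> (last h) a b) t)"
    by (intro sum_mono mult_left_le) (auto simp: Suc)
  also have "\<dots> = 1" by (rule w_sum)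
  finally show ?case by simp
qed

lemma rw_mono: "reach_within \<delta> \<pi>1 \<pi>2 X n h \<le> reach_within \<delta> \<pi>1 \<pi>2 X (Suc n) h"
proof (induction n arbitrary: h)
  case 0 then show ?case by (auto intro!: sum_nonneg simp: rw_nonneg)
next
  case (Suc n)
  show ?case
  proof (cases "last h \<in> X")
    case True then show ?thesis by simp
  next
    case False
    have e1: "reach_within \<delta> \<pi>1 \<pi>2 X (Suc n) h = (\<Sum>a\<in>UNIV. \<Sum>b\<in>UNIV. \<Sum>t\<in>UNIV.
         pmf (\<pi>1 h) a * pmf (\<pi>2 h) b * pmf (\<delta> (last h) a b) t * reach_within \<delta> \<pi>1 \<pi>2 X n (h @ [t]))"
      by (subst reach_within.simps(2)) (simp only: False if_False)
    have e2: "reach_within \<delta> \<pi>1 \<pi>2 X (Suc (Suc n)) h = (\<Sum>a\<in>UNIV. \<Sum>b\<in>UNIV. \<Sum>t\<in>UNIV.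
         pmf (\<pi>1 h) a * pmf (\<pi>2 h) b * pmf (\<delta> (last h) a b) t * reach_within \<delta> \<pi>1 \<pi>2 X (Suc n) (h @ [t]))"
      by (subst reach_within.simps(2)) (simp only: False if_False)
    show ?thesis unfolding e1 e2
      by (intro sum_mono mult_left_mono Suc.IH) auto
  qed
qed

lemma rw_mono_le: "m \<le> n \<Longrightarrow> reach_within \<delta> \<pi>1 \<pi>2 X m h \<le> reach_within \<delta> \<pi>1 \<pi>2 X n h"
  by (induction n rule: dec_induct) (simp, metis order_trans rw_mono)

lemma rp_bdd: "bdd_above (range (\<lambda>n. reach_within \<delta> \<pi>1 \<pi>2 X n h))"
  by (auto intro: bdd_aboveI[where M=1] rw_le1)

lemma rw_le_rp: "reach_within \<delta> \<pi>1 \<pi>2 X n [s] \<le> reach_prob \<delta> \<pi>1 \<pi>2 X s"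
  unfolding reach_prob_def by (rule cSUP_upper[OF _ rp_bdd]) auto

lemma rp_nonneg: "0 \<le> reach_prob \<delta> \<pi>1 \<pi>2 X s"
  using rw_le_rp[of _ _ _ _ 0] rw_nonneg order_trans by metis

lemma rp_le1: "reach_prob \<delta> \<pi>1 \<pi>2 X s \<le> 1"
  unfolding reach_prob_def by (rule cSUP_least) (auto intro: rw_le1)


lemma rw_step:
  assumes "last h \<notin> X"
  shows "reach_within \<delta> \<pi>1 \<pi>2 X (Suc n) h = (\<Sum>a\<in>UNIV. \<Sum>b\<in>UNIV. \<Sum>t\<in>UNIV.
         pmf (\<pi>1 h) a * pmf (\<pi>2 h) b * pmf (\<delta> (last h) a b) t * reach_within \<delta> \<pi>1 \<pi>2 X n (h @ [t]))"
  by (subst reach_within.simps(2)) (simp only: assms if_False)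

lemma trap_zero:
  assumes pi1: "\<forall>h. h \<noteq> [] \<longrightarrow> set_pmf (\<pi>1 h) \<subseteq> A (last h)"
    and CX: "C \<inter> X = {}"
    and trap: "\<forall>s\<in>C. \<forall>a\<in>A s. set_pmf (\<delta> s a (b s)) \<subseteq> C"
  shows "h \<noteq> [] \<Longrightarrow> last h \<in> C \<Longrightarrow> reach_within \<delta> \<pi>1 (memoryless (\<lambda>s. return_pmf (b s))) X n h = 0"
proof (induction n arbitrary: h)
  case 0 then show ?case using CX by auto
next
  case (Suc n)
  have nX: "last h \<notin> X" using Suc.prems CX by auto
  have "pmf (\<pi>1 h) a * pmf (memoryless (\<lambda>s. return_pmf (b s)) h) b' * pmf (\<delta> (last h) a b') t *
        reach_within \<delta> \<pi>1 (memoryless (\<lambda>s. return_pmf (b s))) X n (h @ [t]) = 0" (is "?z a b' t") for a b' t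
  proof (cases "pmf (\<pi>1 h) a = 0 \<or> b' \<noteq> b (last h) \<or> pmf (\<delta> (last h) a b') t = 0")
    case True
    then consider "pmf (\<pi>1 h) a = 0" | "b' \<noteq> b (last h)" | "pmf (\<delta> (last h) a b') t = 0" by blast
    then show ?thesis by cases (simp_all add: memoryless_def)
  next
    case False
    then have "a \<in> A (last h)" using pi1 Suc.prems by (auto simp: set_pmf_eq)
    then have "t \<in> C" using False trap Suc.prems by (auto simp: set_pmf_eq)
    then show ?thesis using Suc.IH[of "h @ [t]"] by simp
  qed
  note z = this
  show ?case unfolding rw_step[OF nX] by (simp only: z sum.neutral_const)
qed

lemma trap_rp_zero:
  assumes pi1: "\<forall>h. h \<noteq> [] \<longrightarrow> set_pmf (\<pi>1 h) \<subseteq> A (last h)"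
    and CX: "C \<inter> X = {}"
    and trap: "\<forall>s\<in>C. \<forall>a\<in>A s. set_pmf (\<delta> s a (b s)) \<subseteq> C"
    and sC: "s \<in> C"
  shows "reach_prob \<delta> \<pi>1 (memoryless (\<lambda>s. return_pmf (b s))) X s = 0"
  unfolding reach_prob_def using trap_zero[where b=b and C=C and A=A and \<delta>=\<delta> and X=X and h="[s]", OF pi1 CX trap] sC by simp

lemma memoryless_strategy:
  "(\<forall>s. set_pmf (\<xi> s) \<subseteq> G s) \<Longrightarrow> strategy G (memoryless \<xi>)"
  by (auto simp: strategy_def memoryless_def)

lemma trap_not_proper:
  assumes Cne: "s0 \<in> C" and CX: "C \<inter> (T \<union> W2 G1 G2 \<delta> T) = {}"
    and bG: "\<forall>s. b s \<in> G2 s"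
    and trap: "\<forall>s\<in>C. \<forall>a\<in>set_pmf (\<xi> s). set_pmf (\<delta> s a (b s)) \<subseteq> C"
  shows "\<not> proper_selector G1 G2 \<delta> T \<xi>"
proof
  assume pr: "proper_selector G1 G2 \<delta> T \<xi>"
  have st: "strategy G2 (memoryless (\<lambda>s. return_pmf (b s)))"
    using bG by (intro memoryless_strategy) auto
  have r1: "reach_prob \<delta> (memoryless \<xi>) (memoryless (\<lambda>s. return_pmf (b s))) (T \<union> W2 G1 G2 \<delta> T) s0 = 1"
    using pr st Cne CX unfolding proper_selector_def proper_def by blast
  have pi1: "\<forall>h. h \<noteq> [] \<longrightarrow> set_pmf (memoryless \<xi> h) \<subseteq> set_pmf (\<xi> (last h))"
    by (auto simp: memoryless_def)
  have r0: "reach_prob \<delta> (memoryless \<xi>) (memoryless (\<lambda>s. return_pmf (b s))) (T \<union> W2 G1 G2 \<delta> T) s0 = 0"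
    using trap_rp_zero[where b=b and C=C and \<delta>=\<delta> and A="\<lambda>s. set_pmf (\<xi> s)", OF pi1 CX trap Cne] .
  show False using r0 r1 by simp
qed



lemma tsum_one_minus:
  fixes w g :: "'a::finite \<Rightarrow> 'b::finite \<Rightarrow> 'c::finite \<Rightarrow> real"
  assumes "(\<Sum>a\<in>UNIV. \<Sum>b\<in>UNIV. \<Sum>t\<in>UNIV. w a b t) = 1"
  shows "(\<Sum>a\<in>UNIV. \<Sum>b\<in>UNIV. \<Sum>t\<in>UNIV. w a b t * (1 - g a b t))
       = 1 - (\<Sum>a\<in>UNIV. \<Sum>b\<in>UNIV. \<Sum>t\<in>UNIV. w a b t * g a b t)"
  using assms by (simp add: right_diff_distrib sum_subtractf)

lemma tsum_const:
  fixes w g :: "'a::finite \<Rightarrow> 'b::finite \<Rightarrow> 'c::finite \<Rightarrow> real"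
  shows "(\<Sum>a\<in>UNIV. \<Sum>b\<in>UNIV. \<Sum>t\<in>UNIV. w a b t * (k * g a b t))
       = k * (\<Sum>a\<in>UNIV. \<Sum>b\<in>UNIV. \<Sum>t\<in>UNIV. w a b t * g a b t)"
  by (simp add: sum_distrib_left mult.left_commute)

lemma rw_in: "last h \<in> X \<Longrightarrow> reach_within \<delta> \<pi>1 \<pi>2 X n h = 1"
  by (cases n) auto

lemma rw_compose:
  assumes c: "\<forall>h. h \<noteq> [] \<longrightarrow> c \<le> reach_within \<delta> \<pi>1 \<pi>2 X N h"
  shows "h \<noteq> [] \<Longrightarrow> 1 - reach_within \<delta> \<pi>1 \<pi>2 X (n + N) h \<le> (1 - c) * (1 - reach_within \<delta> \<pi>1 \<pi>2 X n h)"
proof (induction n arbitrary: h)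
  case 0
  then show ?case using c by (cases "last h \<in> X") (auto simp: rw_in)
next
  case (Suc n)
  show ?case
  proof (cases "last h \<in> X")
    case True then show ?thesis by (simp add: rw_in)
  next
    case False
    let ?w = "\<lambda>a b t. pmf (\<pi>1 h) a * pmf (\<pi>2 h) b * pmf (\<delta> (last h) a b) t"
    have W: "(\<Sum>a\<in>UNIV. \<Sum>b\<in>UNIV. \<Sum>t\<in>UNIV. ?w a b t) = 1" by (rule w_sum)
    have "1 - reach_within \<delta> \<pi>1 \<pi>2 X (Suc n + N) h
        = (\<Sum>a\<in>UNIV. \<Sum>b\<in>UNIV. \<Sum>t\<in>UNIV. ?w a b t * (1 - reach_within \<delta> \<pi>1 \<pi>2 X (n + N) (h @ [t])))"
      unfolding add_Suc rw_step[OF False] by (rule tsum_one_minus[OF W, symmetric])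
    also have "\<dots> \<le> (\<Sum>a\<in>UNIV. \<Sum>b\<in>UNIV. \<Sum>t\<in>UNIV. ?w a b t * ((1 - c) * (1 - reach_within \<delta> \<pi>1 \<pi>2 X n (h @ [t]))))"
      by (intro sum_mono mult_left_mono Suc.IH) auto
    also have "\<dots> = (1 - c) * (\<Sum>a\<in>UNIV. \<Sum>b\<in>UNIV. \<Sum>t\<in>UNIV. ?w a b t * (1 - reach_within \<delta> \<pi>1 \<pi>2 X n (h @ [t])))"
      by (rule tsum_const)
    also have "\<dots> = (1 - c) * (1 - reach_within \<delta> \<pi>1 \<pi>2 X (Suc n) h)"
      unfolding rw_step[OF False] by (rule arg_cong[where f="\<lambda>x. (1-c)*x", OF tsum_one_minus[OF W]])
    finally show ?thesis .
  qed
qed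

lemma rw_iter:
  assumes c: "\<forall>h. h \<noteq> [] \<longrightarrow> c \<le> reach_within \<delta> \<pi>1 \<pi>2 X N h"
    and h: "h \<noteq> []"
  shows "1 - reach_within \<delta> \<pi>1 \<pi>2 X (m * N) h \<le> (1 - c) ^ m"
proof (induction m)
  case 0 then show ?case using rw_nonneg[of \<delta> \<pi>1 \<pi>2 X 0 h] by simp
next
  case (Suc m)
  have "c \<le> reach_within \<delta> \<pi>1 \<pi>2 X N [undefined]" using c by blast
  then have c1: "c \<le> 1" using rw_le1[of \<delta> \<pi>1 \<pi>2 X N "[undefined]"] by linarith
  have "1 - reach_within \<delta> \<pi>1 \<pi>2 X (Suc m * N) h \<le> (1 - c) * (1 - reach_within \<delta> \<pi>1 \<pi>2 X (m * N) h)"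
    using rw_compose[OF c h, of "m * N"] by (simp only: mult_Suc add.commute)
  also have "\<dots> \<le> (1 - c) * (1 - c) ^ m"
    using Suc c1 by (intro mult_left_mono) auto
  finally show ?case by simp
qed

lemma rp_one:
  assumes c: "\<forall>h. h \<noteq> [] \<longrightarrow> c \<le> reach_within \<delta> \<pi>1 \<pi>2 X N h" and c0: "0 < c"
  shows "reach_prob \<delta> \<pi>1 \<pi>2 X s = 1"
proof (rule antisym[OF rp_le1])
  have "c \<le> reach_within \<delta> \<pi>1 \<pi>2 X N [undefined]" using c by blast
  then have c1: "c \<le> 1" using rw_le1[of \<delta> \<pi>1 \<pi>2 X N "[undefined]"] by linarith
  have lim: "(\<lambda>m. 1 - (1 - c) ^ m) \<longlonglongrightarrow> 1 - 0"
    using c0 c1 by (intro tendsto_intros) auto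
  have "1 - (1 - c) ^ m \<le> reach_prob \<delta> \<pi>1 \<pi>2 X s" for m
    using rw_iter[OF c, of "[s]" m] rw_le_rp[of \<delta> \<pi>1 \<pi>2 X "m * N" s] by simp
  then show "1 \<le> reach_prob \<delta> \<pi>1 \<pi>2 X s"
    using LIMSEQ_le_const2[OF lim] by simp
qed


definition attr :: "('s \<Rightarrow> 'm set) \<Rightarrow> ('s \<Rightarrow> 'm \<Rightarrow> 'm \<Rightarrow> 's pmf) \<Rightarrow> ('s \<Rightarrow> 'm pmf) \<Rightarrow> 's set \<Rightarrow> 's set" where
  "attr G2 \<delta> \<xi> Z = Z \<union> {s. \<forall>b\<in>G2 s. \<exists>a\<in>set_pmf (\<xi> s). \<exists>t\<in>Z. 0 < pmf (\<delta> s a b) t}"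

lemma attr_mem: "s \<in> attr G2 \<delta> \<xi> Z \<longleftrightarrow> s \<in> Z \<or> (\<forall>b\<in>G2 s. \<exists>a\<in>set_pmf (\<xi> s). \<exists>t\<in>Z. 0 < pmf (\<delta> s a b) t)"
  by (simp add: attr_def)

lemma attr_incr: "Z \<subseteq> attr G2 \<delta> \<xi> Z"
  by (auto simp: attr_def)

lemma attr_base: "X \<subseteq> (attr G2 \<delta> \<xi> ^^ k) X"
  by (induction k) (auto dest: subsetD[OF attr_incr])

lemma attr_stab:
  fixes X :: "'s::finite set"
  shows "\<exists>k. (attr G2 \<delta> \<xi> ^^ Suc k) X = (attr G2 \<delta> \<xi> ^^ k) X"
proof (rule ccontr)
  let ?Z = "\<lambda>k. (attr G2 \<delta> \<xi> ^^ k) X"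
  assume "\<not> ?thesis"
  then have ne: "?Z k \<subset> ?Z (Suc k)" for k
    using attr_incr[of "?Z k" G2 \<delta> \<xi>] by auto
  have "k \<le> card (?Z k)" for k
  proof (induction k)
    case 0 then show ?case by simp
  next
    case (Suc k)
    have "card (?Z k) < card (?Z (Suc k))"
      by (rule psubset_card_mono[OF finite ne])
    then show ?case using Suc by simp
  qed
  from this[of "Suc (card (UNIV :: 's set))"] card_mono[OF finite subset_UNIV, of "?Z (Suc (card (UNIV :: 's set)))"]
  show False by simp
qed

lemma swap_sum:
  fixes x :: "'a::finite \<Rightarrow> real" and y :: "'b::finite \<Rightarrow> real" and z :: "'a \<Rightarrow> 'b \<Rightarrow> 'c::finite \<Rightarrow> real"
  shows "(\<Sum>a\<in>UNIV. \<Sum>b\<in>UNIV. \<Sum>t\<in>UNIV. x a * y b * z a b t * r t)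
       = (\<Sum>b\<in>UNIV. y b * (\<Sum>a\<in>UNIV. \<Sum>t\<in>UNIV. x a * z a b t * r t))"
  by (subst sum.swap) (simp add: sum_distrib_left mult_ac)

lemma attr_lb:
  assumes st: "strategy G2 \<pi>2"
    and p0: "0 < p" and p1: "p \<le> 1"
    and pmin: "\<forall>s a b t. 0 < pmf (\<xi> s) a * pmf (\<delta> s a b) t \<longrightarrow> p \<le> pmf (\<xi> s) a * pmf (\<delta> s a b) t"
  shows "h \<noteq> [] \<Longrightarrow> last h \<in> (attr G2 \<delta> \<xi> ^^ k) X \<Longrightarrow> p ^ k \<le> reach_within \<delta> (memoryless \<xi>) \<pi>2 X k h"
proof (induction k arbitrary: h)
  case 0 then show ?case by simp
next
  case (Suc k)
  let ?Z = "(attr G2 \<delta> \<xi> ^^ k) X"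
  let ?R = "reach_within \<delta> (memoryless \<xi>) \<pi>2 X"
  have pk: "p ^ Suc k \<le> p ^ k" using p0 p1 by (simp add: mult_left_le_one_le)
  have pk1: "p ^ Suc k \<le> 1" using p0 p1 power_le_one[of p "Suc k"] by simp
  consider "last h \<in> ?Z" | "last h \<in> X" | "last h \<notin> X" "\<forall>b\<in>G2 (last h). \<exists>a\<in>set_pmf (\<xi> (last h)). \<exists>t\<in>?Z. 0 < pmf (\<delta> (last h) a b) t"
    using Suc.prems(2)[simplified, unfolded attr_mem] by blast
  then show ?case
  proof cases
    case 1
    then show ?thesis using Suc.IH[OF Suc.prems(1)] rw_mono[of \<delta> "memoryless \<xi>" \<pi>2 X k h] pk by linarith
  next
    case 2 then show ?thesis using pk1 by (simp add: rw_in)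
  next
    case 3
    let ?s = "last h"
    define inner where "inner b = (\<Sum>a\<in>UNIV. \<Sum>t\<in>UNIV. pmf (\<xi> ?s) a * pmf (\<delta> ?s a b) t * ?R k (h @ [t]))" for b
    have eq: "?R (Suc k) h = (\<Sum>b\<in>UNIV. pmf (\<pi>2 h) b * inner b)"
      unfolding rw_step[OF 3(1)] inner_def memoryless_def by (rule swap_sum)
    have inner_lb: "p ^ Suc k \<le> inner b" if b: "0 < pmf (\<pi>2 h) b" for b
    proof -
      have "b \<in> set_pmf (\<pi>2 h)" using b by (simp add: set_pmf_eq)
      then have "b \<in> G2 ?s" using st Suc.prems(1) unfolding strategy_def by blast
      then obtain a0 t0 where a0: "a0 \<in> set_pmf (\<xi> ?s)" and t0: "t0 \<in> ?Z" and pos: "0 < pmf (\<delta> ?s a0 b) t0"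
        using 3(2) by blast
      have pa: "0 < pmf (\<xi> ?s) a0" using a0 by (simp add: set_pmf_eq)
      have "p \<le> pmf (\<xi> ?s) a0 * pmf (\<delta> ?s a0 b) t0" using pmin pa pos by simp
      moreover have "p ^ k \<le> ?R k (h @ [t0])" using Suc.IH[of "h @ [t0]"] t0 by simp
      ultimately have "p * p ^ k \<le> pmf (\<xi> ?s) a0 * pmf (\<delta> ?s a0 b) t0 * ?R k (h @ [t0])"
        using p0 by (intro mult_mono) auto
      also have "\<dots> \<le> (\<Sum>t\<in>UNIV. pmf (\<xi> ?s) a0 * pmf (\<delta> ?s a0 b) t * ?R k (h @ [t]))"
        by (rule member_le_sum) (auto intro!: mult_nonneg_nonneg rw_nonneg)
      also have "\<dots> \<le> inner b"
        unfolding inner_def by (rule member_le_sum) (auto intro!: sum_nonneg mult_nonneg_nonneg rw_nonneg)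
      finally show ?thesis by simp
    qed
    have "(\<Sum>b\<in>UNIV. pmf (\<pi>2 h) b * p ^ Suc k) \<le> (\<Sum>b\<in>UNIV. pmf (\<pi>2 h) b * inner b)"
    proof (rule sum_mono)
      fix b
      show "pmf (\<pi>2 h) b * p ^ Suc k \<le> pmf (\<pi>2 h) b * inner b"
      proof (cases "pmf (\<pi>2 h) b = 0")
        case True then show ?thesis by simp
      next
        case False then show ?thesis using inner_lb[of b] by (intro mult_left_mono) (auto simp: order_less_le)
      qed
    qed
    moreover have "(\<Sum>b\<in>UNIV. pmf (\<pi>2 h) b * p ^ Suc k) = p ^ Suc k"
      by (simp add: sum_distrib_right[symmetric] sum_pmf_eq_1)
    ultimately show ?thesis using eq by simp
  qed
qed


lemma notrap_reach_one:
  fixes \<xi> :: "'s::finite \<Rightarrow> 'm::finite pmf"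
  assumes notrap: "\<forall>C b. C \<noteq> {} \<longrightarrow> C \<inter> X = {} \<longrightarrow> (\<forall>s\<in>C. b s \<in> G2 s) \<longrightarrow>
              \<not> (\<forall>s\<in>C. \<forall>a\<in>set_pmf (\<xi> s). set_pmf (\<delta> s a (b s)) \<subseteq> C)"
    and st: "strategy G2 \<pi>2"
  shows "reach_prob \<delta> (memoryless \<xi>) \<pi>2 X s = 1"
proof -
  let ?F = "attr G2 \<delta> \<xi>"
  obtain K where K: "(?F ^^ Suc K) X = (?F ^^ K) X" using attr_stab by blast
  let ?Z = "(?F ^^ K) X"
  have all: "?Z = UNIV"
  proof (rule ccontr)
    assume "?Z \<noteq> UNIV"
    define C where "C = - ?Z"
    have Cne: "C \<noteq> {}" using \<open>?Z \<noteq> UNIV\<close> by (auto simp: C_def)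
    have CX: "C \<inter> X = {}" using attr_base[of X K G2 \<delta> \<xi>] by (auto simp: C_def)
    define b where "b s = (SOME b. b \<in> G2 s \<and> (\<forall>a\<in>set_pmf (\<xi> s). \<forall>t\<in>?Z. \<not> 0 < pmf (\<delta> s a b) t))" for s
    have bC: "b s \<in> G2 s \<and> (\<forall>a\<in>set_pmf (\<xi> s). \<forall>t\<in>?Z. \<not> 0 < pmf (\<delta> s a (b s)) t)" if s: "s \<in> C" for s
    proof -
      have "s \<notin> ?F ?Z" using s K by (simp add: C_def)
      then have "\<exists>b. b \<in> G2 s \<and> (\<forall>a\<in>set_pmf (\<xi> s). \<forall>t\<in>?Z. \<not> 0 < pmf (\<delta> s a b) t)"
        unfolding attr_mem by blast
      then show ?thesis unfolding b_def by (rule someI_ex)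
    qed
    have "\<forall>s\<in>C. \<forall>a\<in>set_pmf (\<xi> s). set_pmf (\<delta> s a (b s)) \<subseteq> C"
    proof (intro ballI subsetI)
      fix s a t assume s: "s \<in> C" and a: "a \<in> set_pmf (\<xi> s)" and t: "t \<in> set_pmf (\<delta> s a (b s))"
      have "0 < pmf (\<delta> s a (b s)) t" using t by (simp add: set_pmf_eq order_less_le)
      then show "t \<in> C" using bC[OF s] a by (auto simp: C_def)
    qed
    then show False using notrap Cne CX bC by blast
  qed
  define P where "P = insert 1 {x. \<exists>s a b t. x = pmf (\<xi> s) a * pmf (\<delta> s a b) t \<and> 0 < x}"
  have finP: "finite P"
  proof -
    have "{x. \<exists>s a b t. x = pmf (\<xi> s) a * pmf (\<delta> s a b) t \<and> 0 < x}
          \<subseteq> (\<lambda>(s, a, b, t). pmf (\<xi> s) a * pmf (\<delta> s a b) t) ` UNIV"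
    proof
      fix x assume "x \<in> {x. \<exists>s a b t. x = pmf (\<xi> s) a * pmf (\<delta> s a b) t \<and> 0 < x}"
      then obtain s a b t where "x = pmf (\<xi> s) a * pmf (\<delta> s a b) t" by blast
      then show "x \<in> (\<lambda>(s, a, b, t). pmf (\<xi> s) a * pmf (\<delta> s a b) t) ` UNIV"
        by (intro image_eqI[where x="(s, a, b, t)"]) auto
    qed
    from finite_subset[OF this finite_imageI[OF finite]] show ?thesis unfolding P_def by simp
  qed
  define p where "p = Min P"
  have p0: "0 < p" unfolding p_def using finP by (subst Min_gr_iff) (auto simp: P_def)
  have p1: "p \<le> 1" unfolding p_def using finP by (intro Min_le) (auto simp: P_def)
  have pmin: "\<forall>s a b t. 0 < pmf (\<xi> s) a * pmf (\<delta> s a b) t \<longrightarrow> p \<le> pmf (\<xi> s) a * pmf (\<delta> s a b) t"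
    unfolding p_def using finP by (auto intro!: Min_le simp: P_def)
  have "\<forall>h. h \<noteq> [] \<longrightarrow> p ^ K \<le> reach_within \<delta> (memoryless \<xi>) \<pi>2 X K h"
    using attr_lb[OF st p0 p1 pmin] all by auto
  then show ?thesis by (rule rp_one) (use p0 in simp)
qed



lemma strat2_ne:
  fixes G2 :: "'s::finite \<Rightarrow> 'm::finite set"
  assumes ne: "\<forall>s. G2 s \<noteq> {}"
  shows "{\<pi>. strategy G2 \<pi>} \<noteq> {}"
proof -
  have "strategy G2 (memoryless (\<lambda>s. pmf_of_set (G2 s)))"
    using ne by (intro memoryless_strategy) (auto simp: set_pmf_of_set)
  then show ?thesis by blast
qed

lemma v1s_bdd: "bdd_below ((\<lambda>\<pi>2. reach_prob \<delta> \<pi>1 \<pi>2 X s) ` A)"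
  by (rule bdd_belowI[where m=0]) (auto intro: rp_nonneg)

lemma v1s_nonneg:
  assumes "\<forall>s. G2 s \<noteq> {}"
  shows "0 \<le> val1_strat G2 \<delta> \<pi>1 X s"
  unfolding val1_strat_def using strat2_ne[OF assms]
  by (intro cINF_greatest) (auto intro: rp_nonneg)

lemma v1s_le:
  "strategy G2 \<pi>2 \<Longrightarrow> val1_strat G2 \<delta> \<pi>1 X s \<le> reach_prob \<delta> \<pi>1 \<pi>2 X s"
  unfolding val1_strat_def by (rule cINF_lower[OF v1s_bdd]) auto

lemma v1s_approx:
  assumes "\<forall>s. G2 s \<noteq> {}" "0 < e"
  shows "\<exists>\<pi>2. strategy G2 \<pi>2 \<and> reach_prob \<delta> \<pi>1 \<pi>2 X s < val1_strat G2 \<delta> \<pi>1 X s + e"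
proof -
  have "Inf ((\<lambda>\<pi>2. reach_prob \<delta> \<pi>1 \<pi>2 X s) ` {\<pi>. strategy G2 \<pi>}) < val1_strat G2 \<delta> \<pi>1 X s + e"
    using assms(2) unfolding val1_strat_def by simp
  from cInf_lessD[OF _ this] strat2_ne[OF assms(1)] show ?thesis by auto
qed

lemma rw_shift:
  assumes eq: "\<forall>h''. h'' \<noteq> [] \<and> hd h'' = t \<longrightarrow> \<pi>2 (s # h'') = \<sigma> h''"
  shows "h' \<noteq> [] \<Longrightarrow> hd h' = t \<Longrightarrow>
    reach_within \<delta> (memoryless \<gamma>) \<pi>2 X n (s # h') = reach_within \<delta> (memoryless \<gamma>) \<sigma> X n h'"
proof (induction n arbitrary: h')
  case 0 then show ?case by simp
next
  case (Suc n)
  have IH: "reach_within \<delta> (memoryless \<gamma>) \<pi>2 X n (s # (h' @ [x])) = reach_within \<delta> (memoryless \<gamma>) \<sigma> X n (h' @ [x])" for x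
    using Suc by (intro Suc.IH) auto
  have "\<pi>2 (s # h') = \<sigma> h'" using eq Suc.prems by blast
  then show ?case using Suc.prems IH by (simp add: memoryless_def)
qed

lemma val_le_PreAB:
  fixes \<gamma> :: "'s::finite \<Rightarrow> 'm::finite pmf"
  assumes G2ne: "\<forall>s. G2 s \<noteq> {}" and sel: "selector G2 \<xi>2" and sT: "s \<notin> T"
  shows "sel_val G2 \<delta> T \<gamma> s \<le> PreAB \<delta> \<gamma> \<xi>2 (sel_val G2 \<delta> T \<gamma>) s"
proof (rule field_le_epsilon)
  fix e :: real assume e: "0 < e"
  let ?v = "sel_val G2 \<delta> T \<gamma>"
  define \<sigma> where "\<sigma> t = (SOME \<pi>2. strategy G2 \<pi>2 \<and> reach_prob \<delta> (memoryless \<gamma>) \<pi>2 T t < ?v t + e)" for t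
  have \<sigma>: "strategy G2 (\<sigma> t) \<and> reach_prob \<delta> (memoryless \<gamma>) (\<sigma> t) T t < ?v t + e" for t
  proof -
    have ex: "\<exists>\<pi>2. strategy G2 \<pi>2 \<and> reach_prob \<delta> (memoryless \<gamma>) \<pi>2 T t < ?v t + e"
      unfolding sel_val_def by (rule v1s_approx[OF G2ne e])
    show ?thesis using someI_ex[OF ex] unfolding \<sigma>_def .
  qed
  define \<pi>2 where "\<pi>2 h = (case h of [] \<Rightarrow> \<xi>2 s | [s'] \<Rightarrow> \<xi>2 s' | s' # t # r \<Rightarrow> \<sigma> t (t # r))" for h
  have st: "strategy G2 \<pi>2"
    unfolding strategy_def
  proof (intro allI impI)
    fix h :: "'s list" assume "h \<noteq> []"
    then obtain s' r where h: "h = s' # r" by (cases h) auto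
    show "set_pmf (\<pi>2 h) \<subseteq> G2 (last h)"
    proof (cases r)
      case Nil then show ?thesis using sel h by (simp add: \<pi>2_def selector_def)
    next
      case (Cons t r')
      have "set_pmf (\<sigma> t (t # r')) \<subseteq> G2 (last (t # r'))"
        using \<sigma>[of t] unfolding strategy_def by blast
      then show ?thesis using h Cons by (simp add: \<pi>2_def)
    qed
  qed
  have shift: "reach_within \<delta> (memoryless \<gamma>) \<pi>2 T n [s, t] = reach_within \<delta> (memoryless \<gamma>) (\<sigma> t) T n [t]" for n t
  proof -
    have "\<forall>h''. h'' \<noteq> [] \<and> hd h'' = t \<longrightarrow> \<pi>2 (s # h'') = \<sigma> t h''"
    proof (intro allI impI)
      fix h'' :: "'s list" assume "h'' \<noteq> [] \<and> hd h'' = t"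
      then obtain r where "h'' = t # r" by (cases h'') auto
      then show "\<pi>2 (s # h'') = \<sigma> t h''" by (simp add: \<pi>2_def)
    qed
    from rw_shift[OF this, of "[t]"] show ?thesis by simp
  qed
  have vnn: "0 \<le> ?v t" for t unfolding sel_val_def by (rule v1s_nonneg[OF G2ne])
  let ?w = "\<lambda>a b t. pmf (\<gamma> s) a * pmf (\<xi>2 s) b * pmf (\<delta> s a b) t"
  have W: "(\<Sum>a\<in>UNIV. \<Sum>b\<in>UNIV. \<Sum>t\<in>UNIV. ?w a b t) = 1" by (rule w_sum)
  have pre_eq: "PreAB \<delta> \<gamma> \<xi>2 ?v s + e = (\<Sum>a\<in>UNIV. \<Sum>b\<in>UNIV. \<Sum>t\<in>UNIV. ?w a b t * (?v t + e))"
  proof -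
    have "(\<Sum>a\<in>UNIV. \<Sum>b\<in>UNIV. \<Sum>t\<in>UNIV. ?w a b t * (?v t + e))
        = (\<Sum>a\<in>UNIV. \<Sum>b\<in>UNIV. \<Sum>t\<in>UNIV. ?w a b t * ?v t) + (\<Sum>a\<in>UNIV. \<Sum>b\<in>UNIV. \<Sum>t\<in>UNIV. ?w a b t) * e"
      by (simp add: distrib_left sum.distrib sum_distrib_right)
    also have "(\<Sum>a\<in>UNIV. \<Sum>b\<in>UNIV. \<Sum>t\<in>UNIV. ?w a b t * ?v t) = PreAB \<delta> \<gamma> \<xi>2 ?v s"
      unfolding PreAB_def by (simp add: mult_ac)
    finally show ?thesis using W by simp
  qed
  have pre_nn: "0 \<le> PreAB \<delta> \<gamma> \<xi>2 ?v s"
    unfolding PreAB_def using vnn by (intro sum_nonneg mult_nonneg_nonneg) auto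
  have "reach_within \<delta> (memoryless \<gamma>) \<pi>2 T n [s] \<le> PreAB \<delta> \<gamma> \<xi>2 ?v s + e" for n
  proof (cases n)
    case 0 then show ?thesis using sT pre_nn e by simp
  next
    case (Suc m)
    have "reach_within \<delta> (memoryless \<gamma>) \<pi>2 T n [s]
        = (\<Sum>a\<in>UNIV. \<Sum>b\<in>UNIV. \<Sum>t\<in>UNIV. ?w a b t * reach_within \<delta> (memoryless \<gamma>) (\<sigma> t) T m [t])"
      unfolding Suc using sT shift by (simp add: rw_step memoryless_def \<pi>2_def)
    also have "\<dots> \<le> (\<Sum>a\<in>UNIV. \<Sum>b\<in>UNIV. \<Sum>t\<in>UNIV. ?w a b t * (?v t + e))"
    proof (intro sum_mono mult_left_mono)
      fix t
      show "reach_within \<delta> (memoryless \<gamma>) (\<sigma> t) T m [t] \<le> ?v t + e"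
        using rw_le_rp[of \<delta> "memoryless \<gamma>" "\<sigma> t" T m t] \<sigma>[of t] by linarith
    qed auto
    finally show ?thesis using pre_eq by simp
  qed
  then have "reach_prob \<delta> (memoryless \<gamma>) \<pi>2 T s \<le> PreAB \<delta> \<gamma> \<xi>2 ?v s + e"
    unfolding reach_prob_def by (intro cSUP_least) auto
  moreover have "?v s \<le> reach_prob \<delta> (memoryless \<gamma>) \<pi>2 T s"
    unfolding sel_val_def by (rule v1s_le[OF st])
  ultimately show "?v s \<le> PreAB \<delta> \<gamma> \<xi>2 ?v s + e" by simp
qed



lemma PreAB_return:
  fixes \<delta> :: "'s::finite \<Rightarrow> 'm::finite \<Rightarrow> 'm \<Rightarrow> 's pmf"
  shows "PreAB \<delta> \<xi> (\<lambda>s. return_pmf (c s)) v s = (\<Sum>a\<in>UNIV. \<Sum>t\<in>UNIV. v t * (pmf (\<delta> s a (c s)) t * pmf (\<xi> s) a))"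
proof -
  have "(\<Sum>b\<in>UNIV. \<Sum>t\<in>UNIV. v t * pmf (\<delta> s a b) t * pmf (\<xi> s) a * pmf (return_pmf (c s)) b)
      = (\<Sum>t\<in>UNIV. v t * (pmf (\<delta> s a (c s)) t * pmf (\<xi> s) a))" for a
  proof -
    have "(\<Sum>b\<in>UNIV. \<Sum>t\<in>UNIV. v t * pmf (\<delta> s a b) t * pmf (\<xi> s) a * pmf (return_pmf (c s)) b)
        = (\<Sum>b\<in>UNIV. if b = c s then (\<Sum>t\<in>UNIV. v t * pmf (\<delta> s a b) t * pmf (\<xi> s) a) else 0)"
      by (intro sum.cong) (auto simp: pmf_return)
    also have "\<dots> = (\<Sum>t\<in>UNIV. v t * pmf (\<delta> s a (c s)) t * pmf (\<xi> s) a)"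
      by (simp add: sum.delta')
    finally show ?thesis by (simp add: mult_ac)
  qed
  then show ?thesis unfolding PreAB_def by simp
qed


lemma Pre1_sel_cong: "\<xi> s = \<xi>' s \<Longrightarrow> Pre1_sel G2 \<delta> \<xi> v s = Pre1_sel G2 \<delta> \<xi>' v s"
  unfolding Pre1_sel_def PreAB_def by simp

lemma Pre1_sel_le:
  assumes "\<forall>t. 0 \<le> v t" "selector G2 \<xi>2"
  shows "Pre1_sel G2 \<delta> \<xi> v s \<le> PreAB \<delta> \<xi> \<xi>2 v s"
  unfolding Pre1_sel_def
proof (rule cINF_lower)
  show "bdd_below ((\<lambda>\<xi>2. PreAB \<delta> \<xi> \<xi>2 v s) ` {\<xi>. selector G2 \<xi>})"
    using assms(1) by (intro bdd_belowI[where m=0]) (auto simp: PreAB_def intro!: sum_nonneg mult_nonneg_nonneg)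
qed (use assms in auto)

lemma sel2_ne:
  fixes G2 :: "'s::finite \<Rightarrow> 'm::finite set"
  assumes ne: "\<forall>s. G2 s \<noteq> {}"
  shows "{\<xi>. selector G2 \<xi>} \<noteq> {}"
proof -
  have "selector G2 (\<lambda>s. pmf_of_set (G2 s))"
    using ne by (auto simp: selector_def set_pmf_of_set)
  then show ?thesis by blast
qed

lemma val_le_Pre1_sel:
  fixes \<gamma> :: "'s::finite \<Rightarrow> 'm::finite pmf"
  assumes G2ne: "\<forall>s. G2 s \<noteq> {}" and sT: "s \<notin> T"
  shows "sel_val G2 \<delta> T \<gamma> s \<le> Pre1_sel G2 \<delta> \<gamma> (sel_val G2 \<delta> T \<gamma>) s"
  unfolding Pre1_sel_def using sel2_ne[OF G2ne]
  by (intro cINF_greatest) (auto intro: val_le_PreAB[OF G2ne _ sT])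

lemma proper_of_notrap:
  fixes \<xi> :: "'s::finite \<Rightarrow> 'm::finite pmf"
  assumes "\<forall>C b. C \<noteq> {} \<longrightarrow> C \<inter> (T \<union> W2 G1 G2 \<delta> T) = {} \<longrightarrow> (\<forall>s\<in>C. b s \<in> G2 s) \<longrightarrow>
              \<not> (\<forall>s\<in>C. \<forall>a\<in>set_pmf (\<xi> s). set_pmf (\<delta> s a (b s)) \<subseteq> C)"
  shows "proper_selector G1 G2 \<delta> T \<xi>"
  unfolding proper_selector_def proper_def using notrap_reach_one[OF assms] by blast

definition ext_b :: "('s \<Rightarrow> 'm set) \<Rightarrow> 's set \<Rightarrow> ('s \<Rightarrow> 'm) \<Rightarrow> 's \<Rightarrow> 'm" where
  "ext_b G2 C b s = (if s \<in> C then b s else (SOME x. x \<in> G2 s))"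

lemma ext_b_in: "\<forall>s. G2 s \<noteq> {} \<Longrightarrow> \<forall>s\<in>C. b s \<in> G2 s \<Longrightarrow> ext_b G2 C b s \<in> G2 s"
  unfolding ext_b_def by (auto intro: some_in_eq[THEN iffD2])

lemma val1_zero_trap:
  fixes G1 G2 :: "'s::finite \<Rightarrow> 'm::finite set"
  assumes G1ne: "\<forall>s. G1 s \<noteq> {}" and G2ne: "\<forall>s. G2 s \<noteq> {}"
    and CT: "C \<inter> T = {}" and bC: "\<forall>s\<in>C. b s \<in> G2 s"
    and trap: "\<forall>s\<in>C. \<forall>a\<in>G1 s. set_pmf (\<delta> s a (b s)) \<subseteq> C" and s0: "s0 \<in> C"
  shows "val1 G1 G2 \<delta> T s0 = 0"
proof -
  let ?b = "ext_b G2 C b"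
  have trap': "\<forall>s\<in>C. \<forall>a\<in>G1 s. set_pmf (\<delta> s a (?b s)) \<subseteq> C"
    using trap by (simp add: ext_b_def)
  have st2: "strategy G2 (memoryless (\<lambda>s. return_pmf (?b s)))"
    using ext_b_in[OF G2ne bC] by (intro memoryless_strategy) auto
  have "val1_strat G2 \<delta> \<pi>1 T s0 = 0" if st1: "strategy G1 \<pi>1" for \<pi>1
  proof -
    have pi1: "\<forall>h. h \<noteq> [] \<longrightarrow> set_pmf (\<pi>1 h) \<subseteq> G1 (last h)" using st1 by (simp add: strategy_def)
    have "reach_prob \<delta> \<pi>1 (memoryless (\<lambda>s. return_pmf (?b s))) T s0 = 0"
      by (rule trap_rp_zero[where A=G1 and C=C and b="?b" and \<delta>=\<delta>, OF pi1 CT trap' s0])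
    then have "val1_strat G2 \<delta> \<pi>1 T s0 \<le> 0" using v1s_le[OF st2, of \<delta> \<pi>1 T s0] by simp
    then show ?thesis using v1s_nonneg[OF G2ne, of \<delta> \<pi>1 T s0] by simp
  qed
  then have "val1 G1 G2 \<delta> T s0 = (SUP \<pi>1\<in>{\<pi>. strategy G1 \<pi>}. (0::real))"
    unfolding val1_def by (intro SUP_cong) auto
  also have "\<dots> = 0" using strat2_ne[OF G1ne] by simp
  finally show ?thesis .
qed

lemma gamma0_proper:
  fixes G1 G2 :: "'s::finite \<Rightarrow> 'm::finite set"
  assumes G1ne: "\<forall>s. G1 s \<noteq> {}" and G2ne: "\<forall>s. G2 s \<noteq> {}"
  shows "proper_selector G1 G2 \<delta> T (\<lambda>s. pmf_of_set (G1 s))"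
proof (rule proper_of_notrap, intro allI impI notI)
  fix C b
  assume Cne: "C \<noteq> {}" and CX: "C \<inter> (T \<union> W2 G1 G2 \<delta> T) = {}" and bC: "\<forall>s\<in>C. b s \<in> G2 s"
    and trap: "\<forall>s\<in>C. \<forall>a\<in>set_pmf (pmf_of_set (G1 s)). set_pmf (\<delta> s a (b s)) \<subseteq> C"
  obtain s0 where s0: "s0 \<in> C" using Cne by blast
  have trap': "\<forall>s\<in>C. \<forall>a\<in>G1 s. set_pmf (\<delta> s a (b s)) \<subseteq> C"
    using trap G1ne by (simp add: set_pmf_of_set)
  have "val1 G1 G2 \<delta> T s0 = 0"
    by (rule val1_zero_trap[where C=C and b=b and \<delta>=\<delta>, OF G1ne G2ne _ bC trap' s0]) (use CX in auto)
  then have "s0 \<in> W2 G1 G2 \<delta> T" by (simp add: W2_def)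
  then show False using CX s0 by blast
qed


lemma step_proper:
  fixes G1 G2 :: "'s::finite \<Rightarrow> 'm::finite set" and \<gamma> \<xi>1 :: "'s \<Rightarrow> 'm pmf"
  assumes G2ne: "\<forall>s. G2 s \<noteq> {}"
    and pr: "proper_selector G1 G2 \<delta> T \<gamma>"
    and hyp: "\<forall>s \<in> improve_set G1 G2 \<delta> T \<gamma>.
                Pre1_sel G2 \<delta> \<xi>1 (sel_val G2 \<delta> T \<gamma>) s = Pre1 G1 G2 \<delta> (sel_val G2 \<delta> T \<gamma>) s"
  shows "proper_selector G1 G2 \<delta> T (\<lambda>s. if s \<in> improve_set G1 G2 \<delta> T \<gamma> then \<xi>1 s else \<gamma> s)"
proof (rule proper_of_notrap, intro allI impI notI)
  let ?I = "improve_set G1 G2 \<delta> T \<gamma>"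
  let ?v = "sel_val G2 \<delta> T \<gamma>"
  let ?g = "\<lambda>s. if s \<in> ?I then \<xi>1 s else \<gamma> s"
  fix C b
  assume Cne: "C \<noteq> {}" and CX: "C \<inter> (T \<union> W2 G1 G2 \<delta> T) = {}" and bC: "\<forall>s\<in>C. b s \<in> G2 s"
    and trap: "\<forall>s\<in>C. \<forall>a\<in>set_pmf (?g s). set_pmf (\<delta> s a (b s)) \<subseteq> C"
  let ?b = "ext_b G2 C b"
  have bin: "?b s \<in> G2 s" for s using ext_b_in[OF G2ne bC] by blast
  have bC': "s \<in> C \<Longrightarrow> ?b s = b s" for s by (simp add: ext_b_def)
  let ?\<xi>2 = "\<lambda>s. return_pmf (?b s)"
  have sel2: "selector G2 ?\<xi>2" using bin by (simp add: selector_def)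
  have vnn: "\<forall>t. 0 \<le> ?v t" unfolding sel_val_def using v1s_nonneg[OF G2ne] by blast
  define P where "P s = PreAB \<delta> ?g ?\<xi>2 ?v s" for s
  have P_ge: "?v s \<le> P s \<and> (s \<in> ?I \<longrightarrow> ?v s < P s)" if s: "s \<in> C" for s
  proof -
    have le: "Pre1_sel G2 \<delta> ?g ?v s \<le> P s" unfolding P_def by (rule Pre1_sel_le[OF vnn sel2])
    show ?thesis
    proof (cases "s \<in> ?I")
      case True
      have "Pre1_sel G2 \<delta> ?g ?v s = Pre1_sel G2 \<delta> \<xi>1 ?v s" by (rule Pre1_sel_cong) (simp add: True)
      also have "\<dots> = Pre1 G1 G2 \<delta> ?v s" using hyp True by blast
      finally have "?v s < P s" using True le unfolding improve_set_def by auto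
      then show ?thesis by simp
    next
      case False
      have "Pre1_sel G2 \<delta> ?g ?v s = Pre1_sel G2 \<delta> \<gamma> ?v s" by (rule Pre1_sel_cong) (simp add: False)
      moreover have "s \<notin> T" using CX s by blast
      ultimately show ?thesis using val_le_Pre1_sel[OF G2ne, where s=s and T=T and \<gamma>=\<gamma> and \<delta>=\<delta>] le False by simp
    qed
  qed
  define w where "w s a t = pmf (\<delta> s a (?b s)) t * pmf (?g s) a" for s a t
  have P_form: "P s = (\<Sum>a\<in>UNIV. \<Sum>t\<in>UNIV. ?v t * w s a t)" for s
    unfolding P_def w_def by (rule PreAB_return)
  have Wsum: "(\<Sum>a\<in>UNIV. \<Sum>t\<in>UNIV. w s a t) = 1" for s
  proof -
    have "(\<Sum>t\<in>UNIV. w s a t) = pmf (?g s) a" for a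
      unfolding w_def by (simp add: sum_distrib_right[symmetric] sum_pmf_eq_1)
    then show ?thesis by (simp add: sum_pmf_eq_1)
  qed
  have wnn: "0 \<le> w s a t" for s a t unfolding w_def by simp
  have w_supp: "t \<in> C" if "s \<in> C" "w s a t \<noteq> 0" for s a t
  proof -
    have "a \<in> set_pmf (?g s)" "t \<in> set_pmf (\<delta> s a (?b s))"
      using that(2) unfolding w_def by (auto simp: set_pmf_eq)
    then show ?thesis using trap that(1) bC' by auto
  qed
  define M where "M = Max (?v ` C)"
  have finC: "finite C" by simp
  have vM: "s \<in> C \<Longrightarrow> ?v s \<le> M" for s unfolding M_def using finC by auto
  have "M \<in> ?v ` C" unfolding M_def using finC Cne by (intro Max_in) auto
  then obtain s0 where s0: "s0 \<in> C" "?v s0 = M" by auto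
  define C' where "C' = {s\<in>C. ?v s = M}"
  have key: "s \<notin> ?I \<and> (\<forall>a t. w s a t \<noteq> 0 \<longrightarrow> t \<in> C')" if s: "s \<in> C'" for s
  proof -
    have sC: "s \<in> C" and vs: "?v s = M" using s by (auto simp: C'_def)
    have term_nn: "0 \<le> (M - ?v t) * w s a t" for a t
    proof (cases "w s a t = 0")
      case False then show ?thesis using w_supp[OF sC False] vM wnn by simp
    qed simp
    have diff: "M - P s = (\<Sum>a\<in>UNIV. \<Sum>t\<in>UNIV. (M - ?v t) * w s a t)"
    proof -
      have "(\<Sum>a\<in>UNIV. \<Sum>t\<in>UNIV. (M - ?v t) * w s a t)
          = M * (\<Sum>a\<in>UNIV. \<Sum>t\<in>UNIV. w s a t) - (\<Sum>a\<in>UNIV. \<Sum>t\<in>UNIV. ?v t * w s a t)"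
        by (simp add: left_diff_distrib sum_subtractf sum_distrib_left)
      then show ?thesis using Wsum P_form by simp
    qed
    have sum_nn: "0 \<le> M - P s" unfolding diff by (intro sum_nonneg) (auto intro: term_nn)
    have "M \<le> P s" using P_ge[OF sC] vs by simp
    then have "(\<Sum>a\<in>UNIV. \<Sum>t\<in>UNIV. (M - ?v t) * w s a t) = 0" using sum_nn diff by simp
    then have "\<forall>a. (\<Sum>t\<in>UNIV. (M - ?v t) * w s a t) = 0"
      by (subst (asm) sum_nonneg_eq_0_iff) (auto intro!: sum_nonneg term_nn)
    then have z: "\<forall>a t. (M - ?v t) * w s a t = 0"
      by (metis (no_types, lifting) UNIV_I finite sum_nonneg_eq_0_iff term_nn)
    have notI: "s \<notin> ?I" using P_ge[OF sC] vs sum_nn by auto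
    show ?thesis
    proof (intro conjI notI allI impI)
      fix a t assume "w s a t \<noteq> 0"
      then have "t \<in> C" "?v t = M" using w_supp[OF sC] z by (auto, metis)
      then show "t \<in> C'" by (simp add: C'_def)
    qed
  qed
  have trapC': "\<forall>s\<in>C'. \<forall>a\<in>set_pmf (\<gamma> s). set_pmf (\<delta> s a (?b s)) \<subseteq> C'"
  proof (intro ballI subsetI)
    fix s a t assume s: "s \<in> C'" and a: "a \<in> set_pmf (\<gamma> s)" and t: "t \<in> set_pmf (\<delta> s a (?b s))"
    have "s \<notin> ?I" using key[OF s] by blast
    then have "w s a t \<noteq> 0" using a t by (simp add: w_def set_pmf_eq)
    then show "t \<in> C'" using key[OF s] by blast
  qed
  have "C' \<inter> (T \<union> W2 G1 G2 \<delta> T) = {}" using CX by (auto simp: C'_def)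
  moreover have "s0 \<in> C'" using s0 by (simp add: C'_def)
  ultimately have "\<not> proper_selector G1 G2 \<delta> T \<gamma>"
    using trap_not_proper[where C=C' and b="?b" and \<delta>=\<delta>, OF _ _ _ trapC'] bin by blast
  then show False using pr by blast
qed

theorem lemma7:
  fixes G1 G2 :: "'s::finite \<Rightarrow> 'm::finite set"
    and \<delta> :: "'s \<Rightarrow> 'm \<Rightarrow> 'm \<Rightarrow> 's pmf"
    and T :: "'s set"
    and \<gamma> :: "nat \<Rightarrow> 's \<Rightarrow> 'm pmf"
  assumes G1_ne: "\<forall>s. G1 s \<noteq> {}"
    and G2_ne: "\<forall>s. G2 s \<noteq> {}"
    and absorbing: "\<forall>s \<in> T \<union> W2 G1 G2 \<delta> T. \<forall>a \<in> G1 s. \<forall>b \<in> G2 s. \<delta> s a b = return_pmf s"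
    and init: "\<gamma> 0 = (\<lambda>s. pmf_of_set (G1 s))"
    and step: "\<forall>i. \<exists>\<xi>1. selector G1 \<xi>1
                 \<and> (\<forall>s \<in> improve_set G1 G2 \<delta> T (\<gamma> i).
                       Pre1_sel G2 \<delta> \<xi>1 (sel_val G2 \<delta> T (\<gamma> i)) s
                         = Pre1 G1 G2 \<delta> (sel_val G2 \<delta> T (\<gamma> i)) s)
                 \<and> \<gamma> (Suc i) = (\<lambda>s. if s \<in> improve_set G1 G2 \<delta> T (\<gamma> i) then \<xi>1 s else \<gamma> i s)"
  shows "\<forall>i. proper_selector G1 G2 \<delta> T (\<gamma> i)"
proof
  fix i show "proper_selector G1 G2 \<delta> T (\<gamma> i)"
  proof (induction i)
    case 0 then show ?case using gamma0_proper[OF G1_ne G2_ne] init by simp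
  next
    case (Suc i)
    obtain \<xi>1 where x: "\<forall>s \<in> improve_set G1 G2 \<delta> T (\<gamma> i).
                       Pre1_sel G2 \<delta> \<xi>1 (sel_val G2 \<delta> T (\<gamma> i)) s
                         = Pre1 G1 G2 \<delta> (sel_val G2 \<delta> T (\<gamma> i)) s"
      and g: "\<gamma> (Suc i) = (\<lambda>s. if s \<in> improve_set G1 G2 \<delta> T (\<gamma> i) then \<xi>1 s else \<gamma> i s)"
      using step by blast
    show ?case unfolding g by (rule step_proper[OF G2_ne Suc.IH x])
  qed
qed

end
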